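(* Let $d$ be odd and $s$ even with $s\mid d-1$. Let $G=\langle\tau\rangle\rtimes\langle\sigma\rangle$ with $\tau$ of order $d$, $\sigma$ of order $s$, conjugation by $\sigma$ an automorphism of $\langle\tau\rangle$ of order exactly $s$, and $\sigma^{s/2}\tau\sigma^{-s/2}=\tau^{-1}$. For $j\in\mathbb{Z}$ let $\theta_j\in\{1,\dots,d-1\}$ be defined by $\sigma^j\tau\sigma^{-j}=\tau^{\theta_j}$. In $\mathbb{Z}[G]$ put $T_\sigma=\sum_{j=0}^{s-1}\sigma^j$ and \[\mathcal{B}=(1-\sigma^{s/2})\tau^{\frac{d+1}{2}}\sum_{j=0}^{\frac{s}{2}-1}\Big(\sum_{i=0}^{\theta_j-1}\tau^i\Big)\sigma^j.\] Then (i) $\sigma^{s/2}\mathcal{B}=-\mathcal{B}$, and (ii) $(1-\tau)\mathcal{B}=\tau^{\frac{d+1}{2}}T_\sigma(1-\tau)$. *)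

theory Defs
  imports "HOL-Algebra.Algebra" "HOL-Library.Function_Algebras"
begin

text \<open>The integral group ring Z[G] of a finite group G, modelled as integer-valued
functions on the carrier (values outside the carrier are irrelevant/zero).
Addition, subtraction, negation and finite sums are the pointwise ones.\<close>

definition gr_elem :: "('a, 'b) monoid_scheme \<Rightarrow> 'a \<Rightarrow> ('a \<Rightarrow> int)" where
  "gr_elem G g = (\<lambda>h. if h = g then 1 else 0)"

definition gr_mult :: "('a, 'b) monoid_scheme \<Rightarrow> ('a \<Rightarrow> int) \<Rightarrow> ('a \<Rightarrow> int) \<Rightarrow> ('a \<Rightarrow> int)" where
  "gr_mult G x y = (\<lambda>g. if g \<in> carrier G
      then (\<Sum>h\<in>carrier G. x h * y (inv\<^bsub>G\<^esub> h \<otimes>\<^bsub>G\<^esub> g)) else 0)"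

definition theta :: "('a, 'b) monoid_scheme \<Rightarrow> nat \<Rightarrow> 'a \<Rightarrow> 'a \<Rightarrow> nat \<Rightarrow> nat" where
  "theta G d \<tau> \<sigma> j = (THE t. t \<in> {1..d-1} \<and>
      \<sigma> [^]\<^bsub>G\<^esub> j \<otimes>\<^bsub>G\<^esub> \<tau> \<otimes>\<^bsub>G\<^esub> inv\<^bsub>G\<^esub> (\<sigma> [^]\<^bsub>G\<^esub> j) = \<tau> [^]\<^bsub>G\<^esub> t)"

end

theory Submission imports Defs begin

lemma gr_mult_elem:
  fixes G (structure)
  assumes "group G" "finite (carrier G)" "a \<in> carrier G" "b \<in> carrier G"
  shows "gr_mult G (gr_elem G a) (gr_elem G b) = gr_elem G (a \<otimes>\<^bsub>G\<^esub> b)"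
proof
  fix g
  interpret group G by fact
  show "gr_mult G (gr_elem G a) (gr_elem G b) g = gr_elem G (a \<otimes> b) g"
  proof (cases "g \<in> carrier G")
    case True
    have "(\<Sum>h\<in>carrier G. gr_elem G a h * gr_elem G b (inv h \<otimes> g))
        = (\<Sum>h\<in>carrier G. if h = a then gr_elem G b (inv a \<otimes> g) else 0)"
      by (rule sum.cong) (auto simp: gr_elem_def)
    also have "\<dots> = gr_elem G b (inv a \<otimes> g)" using assms by simp
    also have "\<dots> = gr_elem G (a \<otimes> b) g"
      using assms True unfolding gr_elem_def
      by (metis inv_equality inv_solve_left' m_closed)
    finally show ?thesis using True by (simp add: gr_mult_def)
  next
    case False
    then show ?thesis using assms by (auto simp: gr_mult_def gr_elem_def)
  qed
qed

lemma gr_mult_diff_left: "gr_mult G (x - y) z = gr_mult G x z - gr_mult G y z"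
  by (auto simp: gr_mult_def fun_eq_iff left_diff_distrib sum_subtractf)

lemma gr_mult_diff_right: "gr_mult G z (x - y) = gr_mult G z x - gr_mult G z y"
  by (auto simp: gr_mult_def fun_eq_iff right_diff_distrib sum_subtractf)

lemma gr_mult_minus_right: "gr_mult G z (- y) = - gr_mult G z y"
  by (auto simp: gr_mult_def fun_eq_iff sum_negf)

lemma sum_fun_apply: "(\<Sum>i\<in>A. f i) x = (\<Sum>i\<in>A. f i x)"
  by (induction A rule: infinite_finite_induct) auto

lemma gr_mult_sum_left: "gr_mult G (\<Sum>i\<in>A. f i) z = (\<Sum>i\<in>A. gr_mult G (f i) z)"
  by (auto simp: gr_mult_def fun_eq_iff sum_fun_apply sum_distrib_right intro: sum.swap)

lemma gr_mult_sum_right: "gr_mult G z (\<Sum>i\<in>A. f i) = (\<Sum>i\<in>A. gr_mult G z (f i))"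
  by (auto simp: gr_mult_def fun_eq_iff sum_fun_apply sum_distrib_left intro: sum.swap)


lemma (in group) conj_iff:
  "x \<in> carrier G \<Longrightarrow> y \<in> carrier G \<Longrightarrow> z \<in> carrier G \<Longrightarrow>
   (x \<otimes> y \<otimes> inv x = z) = (x \<otimes> y = z \<otimes> x)"
  by (metis inv_solve_right m_closed)

lemma (in group) pow_inj_lt:
  assumes "x \<in> carrier G" "x [^] (a::nat) = x [^] (b::nat)" "a < ord x" "b < ord x"
  shows "a = b"
proof -
  have *: "a = b" if "a \<le> b" "x [^] (a::nat) = x [^] (b::nat)" "b < ord x" for a b
  proof -
    have "x [^] b = x [^] a \<otimes> x [^] (b - a)" using that assms(1) nat_pow_mult[of x a "b-a"] by simp
    then have "x [^] (b - a) = \<one>" using that assms(1)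
      by (metis l_cancel_one' nat_pow_closed)
    then have "ord x dvd (b - a)" using assms(1) pow_eq_id by blast
    then have "b - a = 0" using that by (meson diff_le_self dvd_imp_le le_less_trans less_irrefl not_gr_zero)
    then show ?thesis using that by simp
  qed
  show ?thesis using *[of a b] *[of b a] assms by (metis nat_le_linear)
qed

lemma (in group) pow_mod_ord:
  assumes "x \<in> carrier G"
  shows "x [^] (n::nat) = x [^] (n mod ord x)"
proof -
  have "x [^] n = x [^] (ord x * (n div ord x)) \<otimes> x [^] (n mod ord x)"
    using assms nat_pow_mult[of x "ord x * (n div ord x)" "n mod ord x"] by simp
  moreover have "x [^] (ord x * (n div ord x)) = \<one>"
    using assms nat_pow_pow[of x "ord x" "n div ord x"] by simp
  ultimately show ?thesis using assms by simp
qed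

lemma theta_spec:
  fixes G (structure)
  assumes grp: "group G" and fin: "finite (carrier G)"
    and tau: "\<tau> \<in> carrier G" and sigma: "\<sigma> \<in> carrier G"
    and ord_tau: "group.ord G \<tau> = d" and d1: "d > 1"
    and normal: "\<sigma> \<otimes> \<tau> \<otimes> inv \<sigma> \<in> generate G {\<tau>}"
  shows "\<sigma> [^] j \<otimes> \<tau> = \<tau> [^] theta G d \<tau> \<sigma> j \<otimes> \<sigma> [^] j"
proof -
  interpret group G by fact
  obtain a :: nat where a: "\<sigma> \<otimes> \<tau> \<otimes> inv \<sigma> = \<tau> [^] a"
    using normal generate_pow_on_finite_carrier[OF fin tau] by blast
  have a': "\<sigma> \<otimes> \<tau> = \<tau> [^] a \<otimes> \<sigma>" using a conj_iff tau sigma by simp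
  have k: "\<sigma> \<otimes> \<tau> [^] k = \<tau> [^] (a * k) \<otimes> \<sigma>" for k :: nat
  proof (induction k)
    case 0 then show ?case using sigma by simp
  next
    case (Suc k)
    have "\<sigma> \<otimes> \<tau> [^] Suc k = (\<sigma> \<otimes> \<tau> [^] k) \<otimes> \<tau>" using tau sigma by (simp add: m_assoc)
    also have "\<dots> = \<tau> [^] (a * k) \<otimes> (\<sigma> \<otimes> \<tau>)" using Suc tau sigma by (simp add: m_assoc)
    also have "\<dots> = \<tau> [^] (a * k) \<otimes> \<tau> [^] a \<otimes> \<sigma>" using a' tau sigma by (simp add: m_assoc)
    also have "\<dots> = \<tau> [^] (a * Suc k) \<otimes> \<sigma>" using tau nat_pow_mult[of \<tau> "a*k" a] by (simp add: add.commute)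
    finally show ?case .
  qed
  have jj: "\<sigma> [^] j \<otimes> \<tau> = \<tau> [^] (a ^ j) \<otimes> \<sigma> [^] j" for j :: nat
  proof (induction j)
    case 0 then show ?case using tau by simp
  next
    case (Suc j)
    have "\<sigma> [^] Suc j \<otimes> \<tau> = \<sigma> \<otimes> (\<sigma> [^] j \<otimes> \<tau>)" using tau sigma nat_pow_Suc2[of \<sigma> j] by (simp add: m_assoc del: nat_pow_Suc)
    also have "\<dots> = (\<sigma> \<otimes> \<tau> [^] (a ^ j)) \<otimes> \<sigma> [^] j" using Suc tau sigma by (simp add: m_assoc)
    also have "\<dots> = \<tau> [^] (a ^ Suc j) \<otimes> \<sigma> [^] Suc j" using k tau sigma nat_pow_Suc2[of \<sigma> j] by (simp add: m_assoc del: nat_pow_Suc)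
    finally show ?case .
  qed
  define t where "t = a ^ j mod d"
  have tt: "\<tau> [^] (a ^ j) = \<tau> [^] t" using pow_mod_ord[OF tau] ord_tau t_def by simp
  have t0: "t \<noteq> 0"
  proof
    assume "t = 0"
    then have "\<sigma> [^] j \<otimes> \<tau> = \<sigma> [^] j" using jj tt tau sigma by simp
    then have "\<tau> = \<one>" using tau sigma by (metis l_cancel_one' nat_pow_closed r_one m_closed)
    then show False using ord_tau d1 by simp
  qed
  have tlt: "t < d" using d1 t_def by simp
  have spec: "\<sigma> [^] j \<otimes> \<tau> \<otimes> inv (\<sigma> [^] j) = \<tau> [^] t"
    using jj[of j] tt conj_iff[of "\<sigma> [^] j" \<tau> "\<tau> [^] t"] tau sigma by simp
  have "theta G d \<tau> \<sigma> j = t"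
    unfolding theta_def
  proof (rule the_equality)
    show "t \<in> {1..d - 1} \<and> \<sigma> [^] j \<otimes> \<tau> \<otimes> inv (\<sigma> [^] j) = \<tau> [^] t"
      using spec t0 tlt by auto
  next
    fix t' assume "t' \<in> {1..d - 1} \<and> \<sigma> [^] j \<otimes> \<tau> \<otimes> inv (\<sigma> [^] j) = \<tau> [^] t'"
    then show "t' = t" using spec pow_inj_lt[OF tau, of t' t] ord_tau tlt by auto
  qed
  then show ?thesis using jj tt by simp
qed


lemma sum_split_add: "(\<Sum>j<h+k. f j) = (\<Sum>j<h. f j) + (\<Sum>j<k. f (h + j :: nat)) "
  by (induction k) (simp_all add: algebra_simps)

theorem lemma6p2:
  fixes G (structure) and \<tau> \<sigma> :: 'a and d s :: nat
  assumes grp: "group G" and fin: "finite (carrier G)"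
    and d_odd: "odd d" and s_even: "even s" and s_dvd: "s dvd d - 1"
    and tau: "\<tau> \<in> carrier G" and sigma: "\<sigma> \<in> carrier G"
    and ord_tau: "group.ord G \<tau> = d" and ord_sigma: "group.ord G \<sigma> = s"
    and gen: "carrier G = {\<tau> [^] (a::nat) \<otimes> \<sigma> [^] (b::nat) | a b. True}"
    and inter: "generate G {\<tau>} \<inter> generate G {\<sigma>} = {\<one>}"
    and normal: "\<sigma> \<otimes> \<tau> \<otimes> inv \<sigma> \<in> generate G {\<tau>}"
    and conj_order: "\<forall>k::nat. 0 < k \<and> k < s \<longrightarrow> \<sigma> [^] k \<otimes> \<tau> \<otimes> inv (\<sigma> [^] k) \<noteq> \<tau>"
    and half: "\<sigma> [^] (s div 2) \<otimes> \<tau> \<otimes> inv (\<sigma> [^] (s div 2)) = inv \<tau>"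
  defines "one_minus_tau \<equiv> gr_elem G \<one> - gr_elem G \<tau>"
    and "T\<sigma> \<equiv> (\<Sum>j<s. gr_elem G (\<sigma> [^] j))"
    and "B \<equiv> gr_mult G (gr_mult G (gr_elem G \<one> - gr_elem G (\<sigma> [^] (s div 2)))
                                  (gr_elem G (\<tau> [^] ((d + 1) div 2))))
              (\<Sum>j<s div 2. gr_mult G (\<Sum>i<theta G d \<tau> \<sigma> j. gr_elem G (\<tau> [^] i))
                                       (gr_elem G (\<sigma> [^] j)))"
  shows "gr_mult G (gr_elem G (\<sigma> [^] (s div 2))) B = - B
       \<and> (gr_mult G one_minus_tau B
           = gr_mult G (gr_mult G (gr_elem G (\<tau> [^] ((d + 1) div 2))) T\<sigma>) one_minus_tau)"
proof -
  interpret group G by fact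
  note mult = gr_mult_elem[OF grp fin]
  have d1: "d > 1"
  proof (rule ccontr)
    assume "\<not> d > 1"
    with d_odd have "d = 1" by (cases d) auto
    then have t1: "\<tau> = \<one>" using ord_tau ord_eq_1 tau by simp
    have "s \<ge> 1" using ord_ge_1[OF fin sigma] ord_sigma by simp
    with s_even have "s \<ge> 2" by presburger
    then have "0 < (1::nat) \<and> (1::nat) < s" by simp
    then have "\<sigma> [^] (1::nat) \<otimes> \<tau> \<otimes> inv (\<sigma> [^] (1::nat)) \<noteq> \<tau>"
      by (rule conj_order[rule_format])
    then show False using t1 sigma by simp
  qed
  define h where "h = s div 2"
  have s: "s = h + h" using s_even h_def by presburger
  define c where "c = d div 2"
  have dc: "d = Suc (c + c)" using d_odd c_def by presburger
  define m where "m = Suc c"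
  have m: "(d + 1) div 2 = m" using dc m_def by simp
  define th where "th = theta G d \<tau> \<sigma>"
  have tau_d: "\<tau> [^] (m + c) = \<one>"
  proof -
    have "m + c = d" using dc m_def by simp
    then show ?thesis using ord_tau tau pow_ord_eq_1 by metis
  qed
  have sig_s: "\<sigma> [^] h \<otimes> \<sigma> [^] h = \<one>"
    using sigma ord_sigma s nat_pow_mult[of \<sigma> h h] pow_ord_eq_1 by metis
  have sig_s2: "\<sigma> [^] h \<otimes> (\<sigma> [^] h \<otimes> x) = x" if "x \<in> carrier G" for x
    using sig_s that sigma by (simp flip: m_assoc)
  have thj: "\<sigma> [^] j \<otimes> \<tau> = \<tau> [^] th j \<otimes> \<sigma> [^] j" for j
    unfolding th_def using theta_spec[OF grp fin tau sigma ord_tau d1 normal] .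
  have half': "\<sigma> [^] h \<otimes> \<tau> = inv \<tau> \<otimes> \<sigma> [^] h"
    using half conj_iff[of "\<sigma> [^] h" \<tau> "inv \<tau>"] tau sigma h_def by simp
  have tsh: "\<tau> \<otimes> \<sigma> [^] h = \<sigma> [^] h \<otimes> inv \<tau>"
  proof -
    have "\<tau> \<otimes> \<sigma> [^] h = \<sigma> [^] h \<otimes> (\<sigma> [^] h \<otimes> \<tau>) \<otimes> \<sigma> [^] h"
      using sig_s2 tau sigma by (simp add: m_assoc)
    also have "\<dots> = \<sigma> [^] h \<otimes> inv \<tau> \<otimes> (\<sigma> [^] h \<otimes> \<sigma> [^] h)"
      using half' tau sigma by (simp add: m_assoc)
    finally show ?thesis using sig_s tau sigma by simp
  qed
  have shpow: "\<sigma> [^] h \<otimes> \<tau> [^] k = inv \<tau> [^] k \<otimes> \<sigma> [^] h" for k :: nat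
  proof (induction k)
    case 0 then show ?case using sigma by simp
  next
    case (Suc k)
    have "\<sigma> [^] h \<otimes> \<tau> [^] Suc k = (\<sigma> [^] h \<otimes> \<tau> [^] k) \<otimes> \<tau>"
      using tau sigma by (simp add: m_assoc)
    also have "\<dots> = inv \<tau> [^] k \<otimes> (\<sigma> [^] h \<otimes> \<tau>)" using Suc tau sigma by (simp add: m_assoc)
    also have "\<dots> = inv \<tau> [^] Suc k \<otimes> \<sigma> [^] h" using half' tau sigma by (simp add: m_assoc)
    finally show ?case .
  qed
  have invc: "inv \<tau> [^] c = \<tau> [^] m"
  proof -
    have "\<tau> [^] m \<otimes> \<tau> [^] c = \<one>" using tau_d tau nat_pow_mult[of \<tau> m c] by simp
    then have "inv (\<tau> [^] c) = \<tau> [^] m" using tau by (intro inv_equality) auto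
    then show ?thesis using nat_pow_inv tau by simp
  qed
  have shc: "\<sigma> [^] h \<otimes> \<tau> [^] c = \<tau> [^] m \<otimes> \<sigma> [^] h" using shpow invc by simp
  define P where "P i j = \<tau> [^] (m + i) \<otimes> \<sigma> [^] j" for i j :: nat
  define Q where "Q k j = \<sigma> [^] h \<otimes> (\<tau> [^] (c + k) \<otimes> \<sigma> [^] j)" for k j :: nat
  have PQc: "P i j \<in> carrier G" "Q i j \<in> carrier G" for i j
    unfolding P_def Q_def using tau sigma by auto
  have QS: "Q (Suc i) j = \<sigma> [^] h \<otimes> (\<tau> [^] (m + i) \<otimes> \<sigma> [^] j)" for i j
    unfolding Q_def m_def by simp
  have pw: "\<tau> [^] (a::nat) \<otimes> (\<tau> [^] (b::nat) \<otimes> y) = \<tau> [^] (a + b) \<otimes> y" if "y \<in> carrier G" for a b y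
    using that tau by (simp add: m_assoc[symmetric] nat_pow_mult)
  let ?e = "gr_elem G"
  have Bexp: "B = (\<Sum>j<h. \<Sum>i<th j. ?e (P i j) - ?e (Q (Suc i) j))"
  proof -
    have 1: "gr_mult G (?e \<one> - ?e (\<sigma> [^] h)) (?e (\<tau> [^] m))
       = ?e (\<tau> [^] m) - ?e (\<sigma> [^] h \<otimes> \<tau> [^] m)"
      using tau sigma by (simp add: gr_mult_diff_left mult)
    have 2: "gr_mult G (\<Sum>i<th j. ?e (\<tau> [^] i)) (?e (\<sigma> [^] j)) = (\<Sum>i<th j. ?e (\<tau> [^] i \<otimes> \<sigma> [^] j))" for j
      using tau sigma by (simp add: gr_mult_sum_left mult)
    have "B = gr_mult G (?e (\<tau> [^] m) - ?e (\<sigma> [^] h \<otimes> \<tau> [^] m))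
                (\<Sum>j<h. \<Sum>i<th j. ?e (\<tau> [^] i \<otimes> \<sigma> [^] j))"
      unfolding B_def m 1[unfolded h_def] 2[unfolded th_def] h_def th_def ..
    also have "\<dots> = (\<Sum>j<h. \<Sum>i<th j. ?e (\<tau> [^] m \<otimes> (\<tau> [^] i \<otimes> \<sigma> [^] j))
                    - ?e (\<sigma> [^] h \<otimes> \<tau> [^] m \<otimes> (\<tau> [^] i \<otimes> \<sigma> [^] j)))"
      using tau sigma by (simp add: gr_mult_sum_right gr_mult_diff_left mult)
    also have "\<dots> = (\<Sum>j<h. \<Sum>i<th j. ?e (P i j) - ?e (Q (Suc i) j))"
      unfolding P_def QS using tau sigma
      by (intro sum.cong refl) (simp add: m_assoc pw)
    finally show ?thesis .
  qed
  have part1: "gr_mult G (?e (\<sigma> [^] h)) B = - B"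
  proof -
    have "gr_mult G (?e (\<sigma> [^] h)) B = (\<Sum>j<h. \<Sum>i<th j. ?e (\<sigma> [^] h \<otimes> P i j) - ?e (\<sigma> [^] h \<otimes> Q (Suc i) j))"
      unfolding Bexp using PQc sigma by (simp add: gr_mult_sum_right gr_mult_diff_right mult)
    also have "\<dots> = (\<Sum>j<h. \<Sum>i<th j. ?e (Q (Suc i) j) - ?e (P i j))"
      using tau sigma sig_s2 by (intro sum.cong refl) (simp add: P_def QS m_assoc)
    also have "\<dots> = - B" unfolding Bexp by (simp add: sum_negf[symmetric])
    finally show ?thesis .
  qed
  have cancel: "inv \<tau> \<otimes> (\<tau> \<otimes> y) = y" if "y \<in> carrier G" for y
    using that tau by (simp add: m_assoc[symmetric])
  have tP: "\<tau> \<otimes> P i j = P (Suc i) j" for i j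
    unfolding P_def using pw[where a="1::nat" and b="m+i" and y="\<sigma> [^] j"] tau sigma by (simp add: m_assoc)
  have tQ: "\<tau> \<otimes> Q (Suc i) j = Q i j" for i j
  proof -
    have e1: "\<tau> [^] (c + Suc i) = \<tau> \<otimes> \<tau> [^] (c + i)"
      by (metis add_Suc_right nat_pow_Suc2 tau)
    have "\<tau> \<otimes> Q (Suc i) j = (\<tau> \<otimes> \<sigma> [^] h) \<otimes> (\<tau> [^] (c + Suc i) \<otimes> \<sigma> [^] j)"
      unfolding Q_def using tau sigma by (simp add: m_assoc)
    also have "\<dots> = \<sigma> [^] h \<otimes> (inv \<tau> \<otimes> (\<tau> \<otimes> (\<tau> [^] (c + i) \<otimes> \<sigma> [^] j)))"
      unfolding tsh e1 using tau sigma by (simp add: m_assoc)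
    also have "\<dots> = Q i j" unfolding Q_def using tau sigma cancel by simp
    finally show ?thesis .
  qed
  have P0: "P 0 j = \<tau> [^] m \<otimes> \<sigma> [^] j" for j unfolding P_def by simp
  have Pth: "P (th j) j = \<tau> [^] m \<otimes> (\<sigma> [^] j \<otimes> \<tau>)" for j
    unfolding P_def using pw[where a=m and b="th j" and y="\<sigma> [^] j"] thj[of j] tau sigma by simp
  have Q0: "Q 0 j = \<tau> [^] m \<otimes> \<sigma> [^] (h + j)" for j
  proof -
    have "Q 0 j = (\<sigma> [^] h \<otimes> \<tau> [^] c) \<otimes> \<sigma> [^] j"
      unfolding Q_def using tau sigma by (simp add: m_assoc)
    also have "\<dots> = \<tau> [^] m \<otimes> (\<sigma> [^] h \<otimes> \<sigma> [^] j)"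
      unfolding shc using tau sigma by (simp add: m_assoc)
    finally show ?thesis using sigma by (simp add: nat_pow_mult)
  qed
  have Qth: "Q (th j) j = \<tau> [^] m \<otimes> (\<sigma> [^] (h + j) \<otimes> \<tau>)" for j
  proof -
    have "Q (th j) j = (\<sigma> [^] h \<otimes> \<tau> [^] c) \<otimes> (\<tau> [^] th j \<otimes> \<sigma> [^] j)"
      unfolding Q_def using tau sigma pw[where a=c and b="th j" and y="\<sigma> [^] j"] by (simp add: m_assoc)
    also have "\<dots> = \<tau> [^] m \<otimes> ((\<sigma> [^] h \<otimes> \<sigma> [^] j) \<otimes> \<tau>)"
      unfolding shc thj[symmetric] using tau sigma by (simp add: m_assoc)
    finally show ?thesis using sigma by (simp add: nat_pow_mult)
  qed
  define f where "f j = ?e (\<tau> [^] m \<otimes> \<sigma> [^] j) - ?e (\<tau> [^] m \<otimes> (\<sigma> [^] j \<otimes> \<tau>))" for j :: nat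
  have L: "gr_mult G one_minus_tau B = (\<Sum>j<h. f j + f (h + j))"
  proof -
    have "gr_mult G one_minus_tau B = (\<Sum>j<h. \<Sum>i<th j. ?e (P i j) - ?e (\<tau> \<otimes> P i j)
                 - (?e (Q (Suc i) j) - ?e (\<tau> \<otimes> Q (Suc i) j)))"
      unfolding Bexp one_minus_tau_def using PQc tau
      by (simp add: gr_mult_sum_right gr_mult_diff_left gr_mult_diff_right mult)
    also have "\<dots> = (\<Sum>j<h. (\<Sum>i<th j. ?e (P i j) - ?e (P (Suc i) j))
                          + (\<Sum>i<th j. ?e (Q i j) - ?e (Q (Suc i) j)))"
      unfolding tP tQ by (intro sum.cong refl) (simp add: sum.distrib[symmetric] algebra_simps)
    also have "\<dots> = (\<Sum>j<h. f j + f (h + j))"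
    proof (intro sum.cong refl)
      fix j
      show "(\<Sum>i<th j. ?e (P i j) - ?e (P (Suc i) j)) + (\<Sum>i<th j. ?e (Q i j) - ?e (Q (Suc i) j))
          = f j + f (h + j)"
        unfolding sum_lessThan_telescope'[of "\<lambda>i. ?e (P i j)"] sum_lessThan_telescope'[of "\<lambda>i. ?e (Q i j)"]
        by (simp add: P0 Pth Q0 Qth f_def)
    qed
    finally show ?thesis .
  qed
  have R: "gr_mult G (gr_mult G (?e (\<tau> [^] m)) T\<sigma>) one_minus_tau = (\<Sum>j<s. f j)"
    unfolding T\<sigma>_def one_minus_tau_def f_def using tau sigma
    by (simp add: gr_mult_sum_right gr_mult_sum_left gr_mult_diff_right mult m_assoc sum_subtractf)
  have "gr_mult G one_minus_tau B = gr_mult G (gr_mult G (?e (\<tau> [^] m)) T\<sigma>) one_minus_tau"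
    unfolding L R s sum_split_add sum.distrib ..
  then show ?thesis using part1 h_def m by simp
qed

end
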